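(* Let $\varepsilon,\gamma>0$ and $\delta>0$, and let $d\geq \frac{1}{(2\varepsilon+\gamma)^{1/\gamma}}$. There is a ReLU neural network of depth $7$, width $\mathcal O(d^{\max(4\varepsilon+2\gamma,1)})$ and magnitude of weights bounded by $1/\delta$ which, given any $(d,\varepsilon)$-sparse vector $\mathbf{x}'\in\mathcal S^d_\delta$ as input, returns a vector $\mathbf{x}''$ of dimension $d^{\varepsilon}$ containing all the non-zero entries of $\mathbf{x}'$, padded with $0$'s if $\mathbf{x}'$ has fewer than $d^{\varepsilon}$ non-zero entries.
   Context: A vector $\mathbf{x}\in\mathbb{R}^d$ is $(d,\varepsilon)$-sparse if it has at most $d^{\varepsilon}$ non-zero entries. $\mathcal S^d_\delta$ is the set of vectors $\mathbf{x}\in\mathbb{R}^d$ whose non-zero entries all lie in $[\delta,1-\delta]$ and are pairwise at distance at least $\delta$. A ReLU network applies $[z]_+=\max\{0,z\}$ after each affine hidden map, with an affine output layer; depth is the number of hidden layers plus one; width is the number of neurons in the largest hidden layer. *)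

theory Defs
  imports "HOL-Library.Multiset" Complex_Main
begin

text \<open>Vectors in R^n are represented as real lists of length n.
A layer is (input dimension, output dimension, weight matrix W, bias b),
realising v \<mapsto> W v + b.\<close>

type_synonym layer = "nat \<times> nat \<times> (nat \<Rightarrow> nat \<Rightarrow> real) \<times> (nat \<Rightarrow> real)"

definition relu :: "real \<Rightarrow> real" where
  "relu z = max 0 z"

definition layer_in :: "layer \<Rightarrow> nat" where
  "layer_in L = fst L"

definition layer_out :: "layer \<Rightarrow> nat" where
  "layer_out L = fst (snd L)"

definition apply_affine :: "layer \<Rightarrow> real list \<Rightarrow> real list" where
  "apply_affine L v = (case L of (n, m, W, b) \<Rightarrow>
      map (\<lambda>i. (\<Sum>j<n. W i j * v ! j) + b i) [0..<m])"

fun eval_net :: "layer list \<Rightarrow> real list \<Rightarrow> real list" where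
  "eval_net [] v = v"
| "eval_net [L] v = apply_affine L v"
| "eval_net (L # Ls) v = eval_net Ls (map relu (apply_affine L v))"

definition valid_net :: "nat \<Rightarrow> nat \<Rightarrow> layer list \<Rightarrow> bool" where
  "valid_net n_in n_out Ls \<longleftrightarrow> Ls \<noteq> [] \<and> layer_in (hd Ls) = n_in \<and> layer_out (last Ls) = n_out
     \<and> (\<forall>i. Suc i < length Ls \<longrightarrow> layer_out (Ls ! i) = layer_in (Ls ! Suc i))"

text \<open>Depth = number of hidden layers + 1 = number of affine maps.\<close>
definition net_depth :: "layer list \<Rightarrow> nat" where
  "net_depth Ls = length Ls"

definition net_width :: "layer list \<Rightarrow> nat" where
  "net_width Ls = Max (insert 0 (set (map layer_out (butlast Ls))))"

definition weights_bounded :: "real \<Rightarrow> layer list \<Rightarrow> bool" where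
  "weights_bounded B Ls \<longleftrightarrow> (\<forall>L\<in>set Ls. case L of (n, m, W, b) \<Rightarrow>
      (\<forall>i<m. \<forall>j<n. \<bar>W i j\<bar> \<le> B) \<and> (\<forall>i<m. \<bar>b i\<bar> \<le> B))"

definition sparse :: "nat \<Rightarrow> real \<Rightarrow> real list \<Rightarrow> bool" where
  "sparse d \<epsilon> x \<longleftrightarrow> length x = d \<and> real (card {i. i < d \<and> x ! i \<noteq> 0}) \<le> real d powr \<epsilon>"

definition in_S :: "nat \<Rightarrow> real \<Rightarrow> real list \<Rightarrow> bool" where
  "in_S d \<delta> x \<longleftrightarrow> length x = d
     \<and> (\<forall>i<d. x ! i \<noteq> 0 \<longrightarrow> \<delta> \<le> x ! i \<and> x ! i \<le> 1 - \<delta>)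
     \<and> (\<forall>i<d. \<forall>j<d. i \<noteq> j \<and> x ! i \<noteq> 0 \<and> x ! j \<noteq> 0 \<longrightarrow> \<delta> \<le> \<bar>x ! i - x ! j\<bar>)"

end

theory Submission
  imports Defs "HOL-Library.FuncSet"
begin

lemma card_eq_fun:
  assumes "i < d" "j < d" "i \<noteq> j"
  shows "card {f \<in> PiE {..<d} (\<lambda>_. {..<R::nat}). f i = f j} \<le> R ^ (d - 1)"
proof -
  let ?A = "{..<d} - {j}"
  let ?F = "{f \<in> PiE {..<d} (\<lambda>_. {..<R::nat}). f i = f j}"
  let ?G = "PiE ?A (\<lambda>_. {..<R::nat})"
  have inj: "inj_on (\<lambda>f. restrict f ?A) ?F"
  proof (rule inj_onI)
    fix f g assume f: "f \<in> ?F" and g: "g \<in> ?F" and eq: "restrict f ?A = restrict g ?A"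
    have e: "f y = g y" if y: "y \<in> ?A" for y
    proof -
      have "restrict f ?A y = restrict g ?A y" using eq by simp
      then show ?thesis using y by simp
    qed
    have fP: "f \<in> PiE {..<d} (\<lambda>_. {..<R})" and fij: "f i = f j" using f by blast+
    have gP: "g \<in> PiE {..<d} (\<lambda>_. {..<R})" and gij: "g i = g j" using g by blast+
    have iA: "i \<in> ?A" using assms by simp
    show "f = g"
    proof (rule PiE_ext[OF fP gP])
      fix x assume x: "x \<in> {..<d}"
      show "f x = g x"
      proof (cases "x = j")
        case True
        then show ?thesis using fij gij e[OF iA] by simp
      next
        case False
        then show ?thesis using e x by simp
      qed
    qed
  qed
  have sub: "(\<lambda>f. restrict f ?A) ` ?F \<subseteq> ?G"
  proof
    fix y assume "y \<in> (\<lambda>f. restrict f ?A) ` ?F"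
    then obtain f where f: "f \<in> ?F" "y = restrict f ?A" by blast
    have "\<forall>x\<in>?A. f x \<in> {..<R}" using f(1) by (auto simp: PiE_iff)
    then show "y \<in> ?G" using f(2) by (simp add: restrict_PiE_iff)
  qed
  have fG: "finite ?G" by (rule finite_PiE) auto
  have "card ?F = card ((\<lambda>f. restrict f ?A) ` ?F)" using inj by (simp add: card_image)
  also have "\<dots> \<le> card ?G" by (rule card_mono[OF fG sub])
  also have "card ?G = R ^ card ?A" by (simp add: card_PiE)
  also have "card ?A = d - 1" using assms by simp
  finally show ?thesis .
qed

lemma card_noninj:
  fixes S :: "nat set" and d k R :: nat
  assumes S: "S \<subseteq> {..<d}" "card S \<le> k" and R: "2*k*k \<le> R" and d: "0 < d"
  shows "2 * card {f \<in> PiE {..<d} (\<lambda>_. {..<R}). \<not> inj_on f S} \<le> card (PiE {..<d} (\<lambda>_. {..<R::nat}))"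
proof -
  let ?F = "PiE {..<d} (\<lambda>_. {..<R::nat})"
  define Off where "Off = {p \<in> S \<times> S. fst p \<noteq> snd p}"
  have fS: "finite S" using S finite_lessThan finite_subset by blast
  have fO: "finite Off" unfolding Off_def using fS by simp
  have fF: "finite ?F" by (rule finite_PiE) auto
  have sub: "{f \<in> ?F. \<not> inj_on f S} \<subseteq> (\<Union>p\<in>Off. {f \<in> ?F. f (fst p) = f (snd p)})"
  proof
    fix f assume f: "f \<in> {f \<in> ?F. \<not> inj_on f S}"
    then obtain x y where xy: "x \<in> S" "y \<in> S" "f x = f y" "x \<noteq> y"
      unfolding inj_on_def by blast
    then have "(x, y) \<in> Off" unfolding Off_def by simp
    then show "f \<in> (\<Union>p\<in>Off. {f \<in> ?F. f (fst p) = f (snd p)})" using f xy by force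
  qed
  have fU: "finite (\<Union>p\<in>Off. {f \<in> ?F. f (fst p) = f (snd p)})"
    by (rule finite_subset[OF _ fF]) blast
  have "card {f \<in> ?F. \<not> inj_on f S} \<le> card (\<Union>p\<in>Off. {f \<in> ?F. f (fst p) = f (snd p)})"
    by (rule card_mono[OF fU sub])
  also have "\<dots> \<le> (\<Sum>p\<in>Off. card {f \<in> ?F. f (fst p) = f (snd p)})" by (rule card_UN_le[OF fO])
  also have "\<dots> \<le> (\<Sum>p\<in>Off. R ^ (d - 1))"
  proof (rule sum_mono)
    fix p assume p: "p \<in> Off"
    then have "fst p \<in> S" "snd p \<in> S" "fst p \<noteq> snd p" unfolding Off_def by auto
    then have "fst p < d" "snd p < d" "fst p \<noteq> snd p" using S by auto
    then show "card {f \<in> ?F. f (fst p) = f (snd p)} \<le> R ^ (d - 1)" by (rule card_eq_fun)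
  qed
  also have "\<dots> = card Off * R ^ (d - 1)" by simp
  also have "\<dots> \<le> (k * k) * R ^ (d - 1)"
  proof -
    have "card Off \<le> card (S \<times> S)" unfolding Off_def by (rule card_mono) (use fS in auto)
    also have "\<dots> = card S * card S" by (simp add: card_cartesian_product)
    also have "\<dots> \<le> k * k" using S by (simp add: mult_le_mono)
    finally show ?thesis by simp
  qed
  finally have a: "card {f \<in> ?F. \<not> inj_on f S} \<le> k * k * R ^ (d - 1)" .
  have "card ?F = R ^ d" by (simp add: card_PiE)
  also have "R ^ d = R * R ^ (d - 1)" using d by (metis Suc_diff_1 power_Suc)
  finally have "card ?F = R * R ^ (d - 1)" .
  moreover have "2 * (k * k * R ^ (d - 1)) \<le> R * R ^ (d - 1)" using R
    by (metis mult.assoc mult_le_mono1)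
  ultimately show ?thesis using a by linarith
qed

lemma card_filter_sum: "finite A \<Longrightarrow> card {x \<in> A. P x} = (\<Sum>x\<in>A. if P x then 1 else (0::nat))"
  by (simp add: sum.If_cases Int_def)

lemma card_split: "finite A \<Longrightarrow> card A = card {x \<in> A. P x} + card {x \<in> A. \<not> P x}"
proof -
  assume f: "finite A"
  have "A = {x \<in> A. P x} \<union> {x \<in> A. \<not> P x}" by auto
  then have "card A = card ({x \<in> A. P x} \<union> {x \<in> A. \<not> P x})" by simp
  also have "\<dots> = card {x \<in> A. P x} + card {x \<in> A. \<not> P x}"
    by (rule card_Un_disjoint) (use f in auto)
  finally show ?thesis .
qed

lemma averaging:
  assumes fF: "finite F" and ne: "F \<noteq> {}" and fU: "finite U"
    and h: "\<And>S. S \<in> U \<Longrightarrow> card F \<le> 2 * card {f \<in> F. P f S}"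
  shows "\<exists>f\<in>F. card U \<le> 2 * card {S \<in> U. P f S}"
proof (rule ccontr)
  assume "\<not> ?thesis"
  hence lt: "\<And>f. f \<in> F \<Longrightarrow> 2 * card {S \<in> U. P f S} < card U" by force
  have "(\<Sum>f\<in>F. 2 * card {S \<in> U. P f S}) < (\<Sum>f\<in>F. card U)"
    by (rule sum_strict_mono[OF fF ne lt])
  also have "\<dots> = card F * card U" by simp
  finally have A: "2 * (\<Sum>f\<in>F. card {S \<in> U. P f S}) < card F * card U"
    by (simp add: sum_distrib_left)
  have "(\<Sum>f\<in>F. card {S \<in> U. P f S}) = (\<Sum>f\<in>F. \<Sum>S\<in>U. if P f S then 1 else 0)"
    using fU by (simp add: card_filter_sum)
  also have "\<dots> = (\<Sum>S\<in>U. \<Sum>f\<in>F. if P f S then 1 else 0)" by (rule sum.swap)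
  also have "\<dots> = (\<Sum>S\<in>U. card {f \<in> F. P f S})"
    using fF by (simp add: card_filter_sum)
  finally have B: "(\<Sum>f\<in>F. card {S \<in> U. P f S}) = (\<Sum>S\<in>U. card {f \<in> F. P f S})" .
  have "card U * card F = (\<Sum>S\<in>U. card F)" by simp
  also have "\<dots> \<le> (\<Sum>S\<in>U. 2 * card {f \<in> F. P f S})" by (rule sum_mono) (rule h)
  also have "\<dots> = 2 * (\<Sum>S\<in>U. card {f \<in> F. P f S})" by (simp add: sum_distrib_left)
  finally show False using A B by (simp add: mult.commute)
qed

lemma hash_family_aux:
  fixes k R d :: nat
  assumes R: "2*k*k \<le> R" "0 < R" and d: "0 < d"
  shows "\<And>U. finite U \<Longrightarrow> (\<forall>S\<in>U. S \<subseteq> {..<d} \<and> card S \<le> k) \<Longrightarrow> card U < 2 ^ T \<Longrightarrow>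
    \<exists>hs. length hs = T \<and> (\<forall>f\<in>set hs. \<forall>i<d. f i < R) \<and> (\<forall>S\<in>U. \<exists>t<T. inj_on (hs ! t) S)"
proof (induction T)
  case 0
  then show ?case by auto
next
  case (Suc T U)
  let ?F = "PiE {..<d} (\<lambda>_. {..<R::nat})"
  have fF: "finite ?F" by (rule finite_PiE) auto
  have ne: "?F \<noteq> {}" using R by (auto simp: PiE_eq_empty_iff)
  have hh: "card ?F \<le> 2 * card {f \<in> ?F. inj_on f S}" if "S \<in> U" for S
  proof -
    have c: "2 * card {f \<in> ?F. \<not> inj_on f S} \<le> card ?F"
      using Suc.prems(2) that card_noninj[OF _ _ R(1) d] by blast
    have "card ?F = card {f \<in> ?F. inj_on f S} + card {f \<in> ?F. \<not> inj_on f S}"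
      using fF by (rule card_split)
    then show ?thesis using c by linarith
  qed
  obtain f where f: "f \<in> ?F" and cf: "card U \<le> 2 * card {S \<in> U. inj_on f S}"
    using averaging[OF fF ne Suc.prems(1), of "\<lambda>f S. inj_on f S"] hh by blast
  define U' where "U' = {S \<in> U. \<not> inj_on f S}"
  have "card U = card {S \<in> U. inj_on f S} + card U'"
    unfolding U'_def using Suc.prems(1) by (rule card_split)
  hence c1: "card U' < 2 ^ T" using cf Suc.prems(3) by simp
  have c2: "finite U'" using Suc.prems(1) U'_def by simp
  have c3: "\<forall>S\<in>U'. S \<subseteq> {..<d} \<and> card S \<le> k" using Suc.prems(2) U'_def by simp
  have "\<exists>hs. length hs = T \<and> (\<forall>f\<in>set hs. \<forall>i<d. f i < R) \<and> (\<forall>S\<in>U'. \<exists>t<T. inj_on (hs ! t) S)"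
    by (rule Suc.IH[OF c2 c3 c1])
  then obtain hs where hs: "length hs = T" "\<forall>f\<in>set hs. \<forall>i<d. f i < R"
     "\<forall>S\<in>U'. \<exists>t<T. inj_on (hs ! t) S" by blast
  show ?case
  proof (intro exI[of _ "f # hs"] conjI)
    show "length (f # hs) = Suc T" using hs by simp
    show "\<forall>g\<in>set (f # hs). \<forall>i<d. g i < R" using hs f by auto
    show "\<forall>S\<in>U. \<exists>t<Suc T. inj_on ((f # hs) ! t) S"
    proof
      fix S assume S: "S \<in> U"
      show "\<exists>t<Suc T. inj_on ((f # hs) ! t) S"
      proof (cases "inj_on f S")
        case True then show ?thesis by (intro exI[of _ 0]) auto
      next
        case False
        then have "S \<in> U'" using S U'_def by simp
        then obtain t where "t < T" "inj_on (hs ! t) S" using hs by blast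
        then show ?thesis by (intro exI[of _ "Suc t"]) auto
      qed
    qed
  qed
qed

lemma card_small_subsets:
  "card {S. S \<subseteq> {..<d::nat} \<and> card S \<le> k} \<le> (Suc d) ^ k"
proof -
  let ?P = "PiE {..<k} (\<lambda>_. {..<Suc d})"
  have sub: "{S. S \<subseteq> {..<d::nat} \<and> card S \<le> k} \<subseteq> (\<lambda>f. f ` {..<k} - {d}) ` ?P"
  proof
    fix S assume S: "S \<in> {S. S \<subseteq> {..<d::nat} \<and> card S \<le> k}"
    have fS: "finite S" using S finite_lessThan finite_subset by blast
    obtain g where g: "bij_betw g {0..<card S} S" using ex_bij_betw_nat_finite[OF fS] by blast
    define f where "f = (\<lambda>i. if i < k then (if i < card S then g i else d) else undefined)"
    have gS: "i < card S \<Longrightarrow> g i \<in> S" for i using g by (auto simp: bij_betw_def)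
    have "f \<in> ?P"
    proof (rule PiE_I)
      fix i assume i: "i \<in> {..<k}"
      show "f i \<in> {..<Suc d}"
      proof (cases "i < card S")
        case True
        then have "g i \<in> S" by (rule gS)
        then show ?thesis using S i True by (auto simp: f_def)
      qed (use i in \<open>auto simp: f_def\<close>)
    next
      fix i assume "i \<notin> {..<k}"
      then show "f i = undefined" by (simp add: f_def)
    qed
    moreover have "S = f ` {..<k} - {d}"
    proof
      show "S \<subseteq> f ` {..<k} - {d}"
      proof
        fix s assume s: "s \<in> S"
        have "S = g ` {0..<card S}" using g by (simp add: bij_betw_def)
        then have "s \<in> g ` {0..<card S}" using s by simp
        then obtain i where i0: "i \<in> {0..<card S}" "s = g i" by blast
        then have i: "i < card S" "s = g i" by auto
        have ik: "i < k" using i S by simp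
        have "f i = s" using i ik by (simp add: f_def)
        moreover have "s \<noteq> d" using s S by auto
        ultimately show "s \<in> f ` {..<k} - {d}" using ik by auto
      qed
      show "f ` {..<k} - {d} \<subseteq> S"
      proof
        fix y assume y: "y \<in> f ` {..<k} - {d}"
        then obtain i where i: "i < k" "y = f i" "y \<noteq> d" by auto
        show "y \<in> S"
        proof (cases "i < card S")
          case True then show ?thesis using i gS by (simp add: f_def)
        next
          case False then show ?thesis using i by (simp add: f_def)
        qed
      qed
    qed
    ultimately show "S \<in> (\<lambda>f. f ` {..<k} - {d}) ` ?P" by blast
  qed
  have "card {S. S \<subseteq> {..<d::nat} \<and> card S \<le> k} \<le> card ((\<lambda>f. f ` {..<k} - {d}) ` ?P)"
  proof (rule card_mono[OF _ sub])
    show "finite ((\<lambda>f. f ` {..<k} - {d}) ` ?P)" by (rule finite_imageI, rule finite_PiE) auto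
  qed
  also have "\<dots> \<le> card ?P" by (rule card_image_le, rule finite_PiE) auto
  also have "\<dots> = Suc d ^ k" by (simp add: card_PiE)
  finally show ?thesis .
qed

lemma hash_family:
  fixes d k b :: nat
  assumes "0 < d" "0 < k" "Suc d \<le> 2 ^ b"
  shows "\<exists>hs. length hs = k * b + 1 \<and> (\<forall>f\<in>set hs. \<forall>i<d. f i < 2*k*k)
     \<and> (\<forall>S. S \<subseteq> {..<d} \<and> card S \<le> k \<longrightarrow> (\<exists>t<k * b + 1. inj_on (hs ! t) S))"
proof -
  let ?U = "{S. S \<subseteq> {..<d::nat} \<and> card S \<le> k}"
  have fin: "finite ?U" by (rule finite_subset[of _ "Pow {..<d}"]) auto
  have "card ?U \<le> Suc d ^ k" by (rule card_small_subsets)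
  also have "\<dots> \<le> (2 ^ b) ^ k" by (rule power_mono) (use assms in auto)
  also have "\<dots> = 2 ^ (k * b)" by (simp only: power_mult[symmetric] mult.commute[of k b])
  also have "\<dots> < 2 ^ (k * b + 1)" by simp
  finally have "card ?U < 2 ^ (k * b + 1)" .
  have R: "2*k*k \<le> 2*k*k" "0 < 2*k*k" using assms by auto
  have P: "\<forall>S\<in>?U. S \<subseteq> {..<d} \<and> card S \<le> k" by blast
  obtain hs where hs: "length hs = k * b + 1" "\<forall>f\<in>set hs. \<forall>i<d. f i < 2*k*k"
     "\<forall>S\<in>?U. \<exists>t<k * b + 1. inj_on (hs ! t) S"
    using hash_family_aux[OF R assms(1) fin P \<open>card ?U < 2 ^ (k * b + 1)\<close>] by blast
  show ?thesis
    using hs by auto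
qed


datatype nid = nX nat | nA nat | nB nat | nSP nat nat | nSM nat nat | nC nat nat | nM nat nat
  | nST nat nat | nG nat | nNT nat nat | nSel nat | nGV nat nat | nGN nat nat | nOne nat
  | nP nat nat nat | nOut nat

definition cw :: "real \<Rightarrow> (nat \<Rightarrow> nat \<Rightarrow> nat) \<Rightarrow> nid \<Rightarrow> nid \<Rightarrow> real" where
  "cw dl h w u = (case w of
     nA i \<Rightarrow> (if u = nX i then 1 / dl else 0)
   | nB i \<Rightarrow> (if u = nX i then 1 / dl else 0)
   | nSP t r \<Rightarrow> (case u of nX i \<Rightarrow> if h t i = r then 1 else 0 | _ \<Rightarrow> 0)
   | nSM t r \<Rightarrow> (case u of nX i \<Rightarrow> if h t i = r then 1 else 0 | _ \<Rightarrow> 0)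
   | nC t r \<Rightarrow> (case u of nA i \<Rightarrow> if h t i = r then 1 else 0 | nB i \<Rightarrow> if h t i = r then -1 else 0 | _ \<Rightarrow> 0)
   | nM t r \<Rightarrow> (case u of nA i \<Rightarrow> if h t i = r then 1 else 0 | nB i \<Rightarrow> if h t i = r then -1 else 0 | _ \<Rightarrow> 0)
   | nST t r \<Rightarrow> (if u = nSP t r then 1 else if u = nSM t r then -1 else if u = nST t r then 1 else 0)
   | nG t \<Rightarrow> (case u of nC t' r \<Rightarrow> if t' = t then -1 else 0 | _ \<Rightarrow> 0)
   | nNT t r \<Rightarrow> (if u = nM t r then 1 else if u = nC t r then -1 else if u = nNT t r then 1 else 0)
   | nSel t \<Rightarrow> (case u of nG t' \<Rightarrow> if t' = t then 1 else if t' < t then -1 else 0 | _ \<Rightarrow> 0)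
   | nGV t r \<Rightarrow> (if u = nST t r then 1 else if u = nSel t then 1 else 0)
   | nGN t r \<Rightarrow> (if u = nNT t r then 1 else if u = nSel t then 1 else 0)
   | nOne l \<Rightarrow> 0
   | nP s r j \<Rightarrow> (case u of nGV t r' \<Rightarrow> if r' = r \<and> (s = 1 \<or> s = 3) then 1 else 0
                 | nGN t r' \<Rightarrow> if r' < r then -1 else 0
                 | nOne l \<Rightarrow> if l < j then 1 else 0 | _ \<Rightarrow> 0)
   | nOut j \<Rightarrow> (case u of nP s r j' \<Rightarrow> if j' = j then (if s = 1 \<or> s = 4 then 1 else -1) else 0 | _ \<Rightarrow> 0)
   | nX i \<Rightarrow> 0)"

definition bw :: "nid \<Rightarrow> real" where
  "bw w = (case w of nB _ \<Rightarrow> -1 | nSM _ _ \<Rightarrow> -1 | nC _ _ \<Rightarrow> -1 | nG _ \<Rightarrow> 1 | nGV _ _ \<Rightarrow> -1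
     | nGN _ _ \<Rightarrow> -1 | nOne _ \<Rightarrow> 1 | nP s _ _ \<Rightarrow> (if s = 3 \<or> s = 4 then -1 else 0) | _ \<Rightarrow> 0)"

definition pairs :: "nat \<Rightarrow> nat \<Rightarrow> (nat \<Rightarrow> nat \<Rightarrow> nid) \<Rightarrow> nid list" where
  "pairs T R F = concat (map (\<lambda>t. map (F t) [0..<R]) [0..<T])"

definition "ids0 d = map nX [0..<d]"
definition "ids1 d T R = map nA [0..<d] @ map nB [0..<d] @ pairs T R nSP @ pairs T R nSM"
definition "ids2 T R = pairs T R nC @ pairs T R nM @ pairs T R nST"
definition "ids3 T R = map nG [0..<T] @ pairs T R nST @ pairs T R nNT"
definition "ids4 T R = map nSel [0..<T] @ pairs T R nST @ pairs T R nNT"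
definition "ids5 k T R = pairs T R nGV @ pairs T R nGN @ map nOne [0..<k]"
definition "ids6 k R = concat (map (\<lambda>s. concat (map (\<lambda>r. map (nP s r) [0..<k]) [0..<R])) [1,2,3,4])"
definition "ids7 k = map nOut [0..<k]"

definition mk :: "real \<Rightarrow> (nat \<Rightarrow> nat \<Rightarrow> nat) \<Rightarrow> nid list \<Rightarrow> nid list \<Rightarrow> layer" where
  "mk dl h ins outs = (length ins, length outs, \<lambda>i j. cw dl h (outs ! i) (ins ! j), \<lambda>i. bw (outs ! i))"

definition net :: "real \<Rightarrow> (nat \<Rightarrow> nat \<Rightarrow> nat) \<Rightarrow> nat \<Rightarrow> nat \<Rightarrow> nat \<Rightarrow> nat \<Rightarrow> layer list" where
  "net dl h d k T R = [mk dl h (ids0 d) (ids1 d T R), mk dl h (ids1 d T R) (ids2 T R),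
     mk dl h (ids2 T R) (ids3 T R), mk dl h (ids3 T R) (ids4 T R), mk dl h (ids4 T R) (ids5 k T R),
     mk dl h (ids5 k T R) (ids6 k R), mk dl h (ids6 k R) (ids7 k)]"

definition nxt :: "real \<Rightarrow> (nat \<Rightarrow> nat \<Rightarrow> nat) \<Rightarrow> nid list \<Rightarrow> (nid \<Rightarrow> real) \<Rightarrow> nid \<Rightarrow> real" where
  "nxt dl h ins v w = relu ((\<Sum>u\<leftarrow>ins. cw dl h w u * v u) + bw w)"

lemma apply_mk:
  "apply_affine (mk dl h ins outs) (map v ins) = map (\<lambda>w. (\<Sum>u\<leftarrow>ins. cw dl h w u * v u) + bw w) outs"
proof -
  let ?F = "\<lambda>w. (\<Sum>u\<leftarrow>ins. cw dl h w u * v u) + bw w"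
  have e: "(\<Sum>j<length ins. cw dl h w (ins ! j) * map v ins ! j) = (\<Sum>u\<leftarrow>ins. cw dl h w u * v u)" for w
    by (simp add: sum_list_sum_nth atLeast0LessThan)
  have "apply_affine (mk dl h ins outs) (map v ins) =
     map (\<lambda>i. (\<Sum>j<length ins. cw dl h (outs ! i) (ins ! j) * map v ins ! j) + bw (outs ! i)) [0..<length outs]"
    unfolding mk_def apply_affine_def by simp
  also have "\<dots> = map (\<lambda>i. ?F (outs ! i)) [0..<length outs]" by (simp only: e)
  also have "\<dots> = map ?F (map (\<lambda>i. outs ! i) [0..<length outs])" by simp
  also have "map (\<lambda>i. outs ! i) [0..<length outs] = outs" by (rule map_nth)
  finally show ?thesis .
qed

lemma hidden_mk:
  "map relu (apply_affine (mk dl h ins outs) (map v ins)) = map (nxt dl h ins v) outs"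
  by (simp add: apply_mk nxt_def)

lemma sum_list_upt0: "(\<Sum>i\<leftarrow>[0..<n]. f i) = (\<Sum>i<n. f i)"
  by (simp add: sum_set_upt_conv_sum_list_nat[symmetric] atLeast0LessThan)

lemma sum_list_concat_map: "sum_list (map g (concat xss)) = (\<Sum>xs\<leftarrow>xss. sum_list (map g xs))"
  by (induction xss) auto

lemma sum_pairs: "(\<Sum>u\<leftarrow>pairs T R F. g u) = (\<Sum>t<T. \<Sum>r<R. g (F t r))"
  by (simp add: pairs_def sum_list_concat_map comp_def sum_list_upt0)

lemma eval_net_net:
  "eval_net (net dl h d k T R) (map v (ids0 d)) =
   map (\<lambda>w. (\<Sum>u\<leftarrow>ids6 k R. cw dl h w u * nxt dl h (ids5 k T R) (nxt dl h (ids4 T R) (nxt dl h (ids3 T R)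
      (nxt dl h (ids2 T R) (nxt dl h (ids1 d T R) (nxt dl h (ids0 d) v))))) u) + bw w) (ids7 k)"
  by (simp add: net_def hidden_mk, rule apply_mk)


lemma ifz_mult: "(if PP then a else (0::real)) * b = (if PP then a * b else 0)" by simp
lemma ifz_mult2: "(if PP then a else if QQ then c else (0::real)) * b = (if PP then a * b else if QQ then c * b else 0)" by simp

lemma delta2[simp]: "(\<Sum>a<(T::nat). \<Sum>b<(R::nat). if a = t \<and> b = r then c else 0) = (if t < T \<and> r < R then (c::real) else 0)"
proof -
  have e: "(\<Sum>b<R. if a = t \<and> b = r then c else 0) = (if a = t then (if r < R then c else 0) else 0)" for a
    by (cases "a = t") (auto simp: sum.delta)
  show ?thesis by (simp add: e)
qed

lemma lA: "(\<Sum>u\<leftarrow>ids0 d. cw dl h (nA i) u * v u) = (if i < d then v (nX i) / dl else 0)"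
  by (simp add: ids0_def cw_def sum_list_upt0 ifz_mult mult.left_neutral cong: if_cong)

lemma lB: "(\<Sum>u\<leftarrow>ids0 d. cw dl h (nB i) u * v u) = (if i < d then v (nX i) / dl else 0)"
  by (simp add: ids0_def cw_def sum_list_upt0 ifz_mult mult.left_neutral cong: if_cong)

lemma lSP: "(\<Sum>u\<leftarrow>ids0 d. cw dl h (nSP t r) u * v u) = (\<Sum>i<d. if h t i = r then v (nX i) else 0)"
  by (simp add: ids0_def cw_def sum_list_upt0 ifz_mult mult.left_neutral cong: if_cong)

lemma lSM: "(\<Sum>u\<leftarrow>ids0 d. cw dl h (nSM t r) u * v u) = (\<Sum>i<d. if h t i = r then v (nX i) else 0)"
  by (simp add: ids0_def cw_def sum_list_upt0 ifz_mult mult.left_neutral cong: if_cong)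

lemma lC: "(\<Sum>u\<leftarrow>ids1 d T R. cw dl h (nC t r) u * v u) = (\<Sum>i<d. if h t i = r then v (nA i) - v (nB i) else 0)"
  by (simp add: ids1_def cw_def sum_list_upt0 ifz_mult sum_pairs mult.left_neutral cong: if_cong)
     (subst sum.distrib[symmetric], rule sum.cong, auto)

lemma lM: "(\<Sum>u\<leftarrow>ids1 d T R. cw dl h (nM t r) u * v u) = (\<Sum>i<d. if h t i = r then v (nA i) - v (nB i) else 0)"
  by (simp add: ids1_def cw_def sum_list_upt0 ifz_mult sum_pairs mult.left_neutral cong: if_cong)
     (subst sum.distrib[symmetric], rule sum.cong, auto)

lemma lST1: "(\<Sum>u\<leftarrow>ids1 d T R. cw dl h (nST t r) u * v u) = (if t < T \<and> r < R then v (nSP t r) - v (nSM t r) else 0)"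
  by (simp add: ids1_def cw_def sum_list_upt0 ifz_mult ifz_mult2 sum_pairs mult.left_neutral cong: if_cong)

lemma neg_if: "(if PP then - a else (0::real)) = - (if PP then a else 0)" by simp

lemma sum_if_const[simp]: "(\<Sum>b\<in>S. if PP then f b else 0) = (if PP then (\<Sum>b\<in>S. f b) else (0::real))"
  by simp

lemma lG: "(\<Sum>u\<leftarrow>ids2 T R. cw dl h (nG t) u * v u) = (if t < T then - (\<Sum>r<R. v (nC t r)) else 0)"
  by (simp add: ids2_def cw_def ifz_mult sum_pairs sum.delta sum_negf cong: if_cong)

lemma lST2: "(\<Sum>u\<leftarrow>ids2 T R. cw dl h (nST t r) u * v u) = (if t < T \<and> r < R then v (nST t r) else 0)"
  by (simp add: ids2_def cw_def ifz_mult ifz_mult2 sum_pairs cong: if_cong)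

lemma lNT2: "(\<Sum>u\<leftarrow>ids2 T R. cw dl h (nNT t r) u * v u) = (if t < T \<and> r < R then v (nM t r) - v (nC t r) else 0)"
  by (simp add: ids2_def cw_def ifz_mult ifz_mult2 sum_pairs cong: if_cong)

lemma lSel: "(\<Sum>u\<leftarrow>ids3 T R. cw dl h (nSel t) u * v u) = (if t < T then v (nG t) else 0) - (\<Sum>t'<T. if t' < t then v (nG t') else 0)"
proof -
  have e: "(\<Sum>i<T. if i = t then v (nG t) else if i < t then - v (nG i) else 0)
     = (\<Sum>i<T. (if i = t then v (nG t) else 0) + (if i < t then - v (nG i) else 0))"
    by (rule sum.cong) auto
  show ?thesis
    apply (simp add: ids3_def cw_def ifz_mult ifz_mult2 sum_pairs sum_list_upt0 cong: if_cong)
    apply (simp only: e)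
    apply (simp add: sum.distrib sum.delta neg_if sum_negf sum_subtractf cong: if_cong)
    done
qed

lemma lST3: "(\<Sum>u\<leftarrow>ids3 T R. cw dl h (nST t r) u * v u) = (if t < T \<and> r < R then v (nST t r) else 0)"
  by (simp add: ids3_def cw_def ifz_mult ifz_mult2 sum_pairs sum_list_upt0 cong: if_cong)

lemma lNT3: "(\<Sum>u\<leftarrow>ids3 T R. cw dl h (nNT t r) u * v u) = (if t < T \<and> r < R then v (nNT t r) else 0)"
  by (simp add: ids3_def cw_def ifz_mult ifz_mult2 sum_pairs sum_list_upt0 cong: if_cong)

lemma lST4: "(\<Sum>u\<leftarrow>ids4 T R. cw dl h (nST t r) u * v u) = (if t < T \<and> r < R then v (nST t r) else 0)"
  by (simp add: ids4_def cw_def ifz_mult ifz_mult2 sum_pairs sum_list_upt0 cong: if_cong)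

lemma lNT4: "(\<Sum>u\<leftarrow>ids4 T R. cw dl h (nNT t r) u * v u) = (if t < T \<and> r < R then v (nNT t r) else 0)"
  by (simp add: ids4_def cw_def ifz_mult ifz_mult2 sum_pairs sum_list_upt0 cong: if_cong)

lemma lGV: "(\<Sum>u\<leftarrow>ids4 T R. cw dl h (nGV t r) u * v u) = (if t < T \<and> r < R then v (nST t r) else 0) + (if t < T then v (nSel t) else 0)"
  by (simp add: ids4_def cw_def ifz_mult ifz_mult2 sum_pairs sum_list_upt0 sum.delta cong: if_cong)

lemma lGN: "(\<Sum>u\<leftarrow>ids4 T R. cw dl h (nGN t r) u * v u) = (if t < T \<and> r < R then v (nNT t r) else 0) + (if t < T then v (nSel t) else 0)"
  by (simp add: ids4_def cw_def ifz_mult ifz_mult2 sum_pairs sum_list_upt0 sum.delta cong: if_cong)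

lemma lOne: "(\<Sum>u\<leftarrow>ids4 T R. cw dl h (nOne l) u * v u) = 0"
  by (simp add: ids4_def cw_def sum_pairs sum_list_upt0)

lemma lP: "(\<Sum>u\<leftarrow>ids5 k T R. cw dl h (nP s r j) u * v u) =
   (if s = 1 \<or> s = 3 then (\<Sum>t<T. if r < R then v (nGV t r) else 0) else 0)
   - (\<Sum>t<T. \<Sum>r'<R. if r' < r then v (nGN t r') else 0) + (\<Sum>l<k. if l < j then v (nOne l) else 0)"
  by (simp add: ids5_def cw_def ifz_mult ifz_mult2 sum_pairs sum_list_upt0 sum.delta neg_if sum_negf cong: if_cong)

lemma lOut: "(\<Sum>u\<leftarrow>ids6 k R. cw dl h (nOut j) u * v u) =
   (if j < k then (\<Sum>r<R. v (nP 1 r j) - v (nP 2 r j) - v (nP 3 r j) + v (nP 4 r j)) else 0)"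
  by (simp add: ids6_def cw_def ifz_mult sum_list_concat_map sum_list_upt0 sum.delta sum.distrib sum_negf sum_subtractf cong: if_cong)


lemma relu_pos: "0 \<le> z \<Longrightarrow> relu z = z" by (simp add: relu_def)
lemma relu_npos: "z \<le> 0 \<Longrightarrow> relu z = 0" by (simp add: relu_def)
lemma relu_ge0: "0 \<le> relu z" by (simp add: relu_def)
lemma relu_min1: "0 \<le> z \<Longrightarrow> relu (z - relu (z - 1)) = min z 1" by (simp add: relu_def)

lemma sum_lt_restrict: "t \<le> (T::nat) \<Longrightarrow> (\<Sum>t'<T. if t' < t then f t' else (0::real)) = (\<Sum>t'<t. f t')"
proof -
  assume "t \<le> T"
  then have "{..<T} \<inter> {t'. t' < t} = {..<t}" by auto
  then show ?thesis by (simp add: sum.If_cases)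
qed

lemma sum_count: "finite A \<Longrightarrow> (\<Sum>i\<in>A. if PP i then 1 else (0::real)) = real (card {i \<in> A. PP i})"
  by (simp add: sum.If_cases Int_def)

locale netsem =
  fixes dl :: real and d k T R :: nat and h :: "nat \<Rightarrow> nat \<Rightarrow> nat" and x :: "real list"
  assumes dl: "0 < dl"
    and lenx: "length x = d"
    and xval: "\<And>i. i < d \<Longrightarrow> x ! i \<noteq> 0 \<Longrightarrow> dl \<le> x ! i \<and> x ! i \<le> 1 - dl"
    and hR: "\<And>t i. t < T \<Longrightarrow> i < d \<Longrightarrow> h t i < R"
    and supk: "card {i. i < d \<and> x ! i \<noteq> 0} \<le> k"
    and good: "\<exists>t<T. inj_on (h t) {i. i < d \<and> x ! i \<noteq> 0}"
begin

definition "supp = {i. i < d \<and> x ! i \<noteq> 0}"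
definition "v0 u = (case u of nX i \<Rightarrow> x ! i | _ \<Rightarrow> 0)"
definition "v1 = nxt dl h (ids0 d) v0"
definition "v2 = nxt dl h (ids1 d T R) v1"
definition "v3 = nxt dl h (ids2 T R) v2"
definition "v4 = nxt dl h (ids3 T R) v3"
definition "v5 = nxt dl h (ids4 T R) v4"
definition "v6 = nxt dl h (ids5 k T R) v5"
definition "ind i = (if x ! i = 0 then 0 else (1::real))"
definition "Sb t r = (\<Sum>i<d. if h t i = r then x ! i else 0)"
definition "Nb t r = (\<Sum>i<d. if h t i = r then ind i else 0)"

lemma xnn: "i < d \<Longrightarrow> 0 \<le> x ! i"
  using xval dl by (cases "x ! i = 0") force+

lemma xlt1: "i < d \<Longrightarrow> x ! i < 1"
  using xval dl by (cases "x ! i = 0") force+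

lemma Sb_nn: "0 \<le> Sb t r"
  unfolding Sb_def by (rule sum_nonneg) (simp add: xnn)

lemma Nb_card: "Nb t r = real (card {i \<in> supp. h t i = r})"
proof -
  have "Nb t r = (\<Sum>i<d. if h t i = r \<and> x ! i \<noteq> 0 then 1 else 0)"
    unfolding Nb_def ind_def by (rule sum.cong) auto
  also have "\<dots> = real (card {i \<in> {..<d}. h t i = r \<and> x ! i \<noteq> 0})" by (rule sum_count) simp
  also have "{i \<in> {..<d}. h t i = r \<and> x ! i \<noteq> 0} = {i \<in> supp. h t i = r}" unfolding supp_def by auto
  finally show ?thesis .
qed

lemma Nb_nn: "0 \<le> Nb t r" by (simp add: Nb_card)

lemma v1A: "i < d \<Longrightarrow> v1 (nA i) = x ! i / dl"
proof -
  assume i: "i < d"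
  have "0 \<le> x ! i / dl" using xnn[OF i] dl by simp
  then show ?thesis using i by (simp add: v1_def nxt_def lA bw_def v0_def relu_pos)
qed

lemma v1B: "i < d \<Longrightarrow> v1 (nB i) = relu (x ! i / dl - 1)"
  by (simp add: v1_def nxt_def lB bw_def v0_def)

lemma v1AB: "i < d \<Longrightarrow> v1 (nA i) - v1 (nB i) = ind i"
proof -
  assume i: "i < d"
  show ?thesis
  proof (cases "x ! i = 0")
    case True then show ?thesis using i by (simp add: v1A v1B ind_def relu_npos)
  next
    case False
    then have "dl \<le> x ! i" using xval i by blast
    then have "1 \<le> x ! i / dl" using dl by simp
    then show ?thesis using i False by (simp add: v1A v1B ind_def relu_pos)
  qed
qed

lemma v0Sb: "(\<Sum>i<d. if h t i = r then v0 (nX i) else 0) = Sb t r"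
  by (simp add: v0_def Sb_def cong: if_cong)

lemma v1SP: "v1 (nSP t r) = Sb t r"
  by (simp add: v1_def nxt_def lSP bw_def v0Sb relu_pos Sb_nn)

lemma v1SM: "v1 (nSM t r) = relu (Sb t r - 1)"
  by (simp add: v1_def nxt_def lSM bw_def v0Sb)

lemma v2C: "v2 (nC t r) = relu (Nb t r - 1)"
proof -
  have "(\<Sum>i<d. if h t i = r then v1 (nA i) - v1 (nB i) else 0) = Nb t r"
    unfolding Nb_def by (rule sum.cong) (auto simp: v1AB)
  then show ?thesis by (simp add: v2_def nxt_def lC bw_def)
qed

lemma v2M: "v2 (nM t r) = Nb t r"
proof -
  have "(\<Sum>i<d. if h t i = r then v1 (nA i) - v1 (nB i) else 0) = Nb t r"
    unfolding Nb_def by (rule sum.cong) (auto simp: v1AB)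
  then show ?thesis by (simp add: v2_def nxt_def lM bw_def relu_pos Nb_nn)
qed

lemma v2ST: "t < T \<Longrightarrow> r < R \<Longrightarrow> v2 (nST t r) = min (Sb t r) 1"
  by (simp add: v2_def nxt_def lST1 bw_def v1SP v1SM relu_min1 Sb_nn)


lemma v3G: "t < T \<Longrightarrow> v3 (nG t) = relu (1 - (\<Sum>r<R. relu (Nb t r - 1)))"
  by (simp add: v3_def nxt_def lG bw_def v2C)

lemma v3ST: "t < T \<Longrightarrow> r < R \<Longrightarrow> v3 (nST t r) = min (Sb t r) 1"
  by (simp add: v3_def nxt_def lST2 bw_def v2ST relu_pos Sb_nn)

lemma v3NT: "t < T \<Longrightarrow> r < R \<Longrightarrow> v3 (nNT t r) = min (Nb t r) 1"
  by (simp add: v3_def nxt_def lNT2 bw_def v2M v2C relu_min1 Nb_nn)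

lemma v4Sel: "t < T \<Longrightarrow> v4 (nSel t) = relu (v3 (nG t) - (\<Sum>t'<t. v3 (nG t')))"
  by (simp add: v4_def nxt_def lSel bw_def sum_lt_restrict)

lemma v4ST: "t < T \<Longrightarrow> r < R \<Longrightarrow> v4 (nST t r) = min (Sb t r) 1"
  by (simp add: v4_def nxt_def lST3 bw_def v3ST relu_pos Sb_nn)

lemma v4NT: "t < T \<Longrightarrow> r < R \<Longrightarrow> v4 (nNT t r) = min (Nb t r) 1"
  by (simp add: v4_def nxt_def lNT3 bw_def v3NT relu_pos Nb_nn)

lemma v5GV: "t < T \<Longrightarrow> r < R \<Longrightarrow> v5 (nGV t r) = relu (min (Sb t r) 1 + v4 (nSel t) - 1)"
  by (simp add: v5_def nxt_def lGV bw_def v4ST)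

lemma v5GN: "t < T \<Longrightarrow> r < R \<Longrightarrow> v5 (nGN t r) = relu (min (Nb t r) 1 + v4 (nSel t) - 1)"
  by (simp add: v5_def nxt_def lGN bw_def v4NT)

lemma v5One: "v5 (nOne l) = 1"
  by (simp add: v5_def nxt_def lOne bw_def relu_def)

lemma v6P: "j \<le> k \<Longrightarrow> v6 (nP s r j) = relu ((if s = 1 \<or> s = 3 then (\<Sum>t<T. if r < R then v5 (nGV t r) else 0) else 0)
   - (\<Sum>t<T. \<Sum>r'<R. if r' < r then v5 (nGN t r') else 0) + real j + (if s = 3 \<or> s = 4 then -1 else 0))"
proof -
  assume j: "j \<le> k"
  have "(\<Sum>l<k. if l < j then v5 (nOne l) else 0) = (\<Sum>l<j. 1)"
    by (simp add: v5One sum_lt_restrict j)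
  then show ?thesis by (simp add: v6_def nxt_def lP bw_def)
qed

lemma eval_out: "eval_net (net dl h d k T R) x =
   map (\<lambda>j. \<Sum>r<R. v6 (nP 1 r j) - v6 (nP 2 r j) - v6 (nP 3 r j) + v6 (nP 4 r j)) [0..<k]"
proof -
  have x: "map v0 (ids0 d) = x" unfolding ids0_def v0_def
    by (simp add: lenx[symmetric] comp_def map_nth)
  have "eval_net (net dl h d k T R) x = map (\<lambda>w. (\<Sum>u\<leftarrow>ids6 k R. cw dl h w u * v6 u) + bw w) (ids7 k)"
    using eval_net_net[of dl h d k T R v0] unfolding x v6_def v5_def v4_def v3_def v2_def v1_def .
  also have "\<dots> = map (\<lambda>j. \<Sum>r<R. v6 (nP 1 r j) - v6 (nP 2 r j) - v6 (nP 3 r j) + v6 (nP 4 r j)) [0..<k]"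
    unfolding ids7_def by (simp add: lOut bw_def)
  finally show ?thesis .
qed

end


lemma pick:
  assumes "0 \<le> y" "y \<le> 1"
  shows "relu (y - real q + real j) - relu (real j - real q) - relu (y - real q + real j - 1)
     + relu (real j - real q - 1) = (if q = j then y else 0)"
proof (cases "q = j")
  case True then show ?thesis using assms by (simp add: relu_def)
next
  case False
  show ?thesis
  proof (cases "q < j")
    case True
    then have "1 \<le> real j - real q" by linarith
    then show ?thesis using assms False by (simp add: relu_def)
  next
    case False2: False
    then have "real j - real q \<le> -1" using False by linarith
    then show ?thesis using assms False by (simp add: relu_def)
  qed
qed

context netsem
begin

definition "t0 = (LEAST t. inj_on (h t) supp)"

lemma t0: "t0 < T" "inj_on (h t0) supp" "\<And>t. t < t0 \<Longrightarrow> \<not> inj_on (h t) supp"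
proof -
  obtain t1 where t1: "t1 < T" "inj_on (h t1) supp" using good unfolding supp_def by blast
  show "inj_on (h t0) supp" unfolding t0_def by (rule LeastI[of _ t1]) (rule t1(2))
  have "t0 \<le> t1" unfolding t0_def by (rule Least_le) (rule t1(2))
  then show "t0 < T" using t1 by simp
  show "\<And>t. t < t0 \<Longrightarrow> \<not> inj_on (h t) supp" unfolding t0_def by (rule not_less_Least)
qed

lemma fin_supp: "finite supp" unfolding supp_def by simp

lemma supp_d: "i \<in> supp \<Longrightarrow> i < d" unfolding supp_def by simp

lemma v3G_val: "t < T \<Longrightarrow> v3 (nG t) = (if inj_on (h t) supp then 1 else 0)"
proof -
  assume t: "t < T"
  show ?thesis
  proof (cases "inj_on (h t) supp")
    case True
    have "card {i \<in> supp. h t i = r} \<le> 1" for r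
    proof -
      have "finite {i \<in> supp. h t i = r}" using fin_supp by simp
      moreover have "\<forall>a\<in>{i \<in> supp. h t i = r}. \<forall>b\<in>{i \<in> supp. h t i = r}. a = b"
        using True by (auto simp: inj_on_def)
      ultimately have "card {i \<in> supp. h t i = r} \<le> Suc 0" by (simp only: card_le_Suc0_iff_eq)
      then show ?thesis by simp
    qed
    then have "relu (Nb t r - 1) = 0" for r by (simp add: Nb_card relu_npos)
    then show ?thesis using t True by (simp add: v3G relu_def)
  next
    case False
    then obtain a b where ab: "a \<in> supp" "b \<in> supp" "h t a = h t b" "a \<noteq> b"
      unfolding inj_on_def by blast
    let ?r = "h t a"
    have rR: "?r < R" using hR t supp_d ab by blast
    have "{a, b} \<subseteq> {i \<in> supp. h t i = ?r}" using ab by auto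
    then have "card {a, b} \<le> card {i \<in> supp. h t i = ?r}"
      by (rule card_mono[rotated]) (simp add: fin_supp)
    then have "2 \<le> card {i \<in> supp. h t i = ?r}" using ab by simp
    then have c: "1 \<le> relu (Nb t ?r - 1)" by (simp add: Nb_card relu_def)
    have "relu (Nb t ?r - 1) \<le> (\<Sum>r<R. relu (Nb t r - 1))"
      by (rule member_le_sum) (use rR in \<open>auto simp: relu_ge0\<close>)
    then have "1 - (\<Sum>r<R. relu (Nb t r - 1)) \<le> 0" using c by linarith
    then show ?thesis using t False by (simp add: v3G relu_npos)
  qed
qed

lemma v3G_01: "t < T \<Longrightarrow> 0 \<le> v3 (nG t) \<and> v3 (nG t) \<le> 1"
  by (simp add: v3G_val)

lemma v4Sel_val: "t < T \<Longrightarrow> v4 (nSel t) = (if t = t0 then 1 else 0)"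
proof -
  assume t: "t < T"
  have nn: "0 \<le> (\<Sum>t'<t. v3 (nG t'))" by (rule sum_nonneg) (use t v3G_01 in auto)
  consider "t < t0" | "t = t0" | "t0 < t" by linarith
  then show ?thesis
  proof cases
    case 1
    then have "v3 (nG t) = 0" using t t0(3) by (simp add: v3G_val)
    then show ?thesis using 1 nn by (simp add: v4Sel t relu_npos)
  next
    case 2
    have "(\<Sum>t'<t. v3 (nG t')) = 0"
      by (rule sum.neutral) (use 2 t t0(3) in \<open>auto simp: v3G_val\<close>)
    moreover have "v3 (nG t) = 1" using 2 t t0(2) by (simp add: v3G_val)
    ultimately show ?thesis using 2 t by (simp add: v4Sel relu_def)
  next
    case 3
    have "v3 (nG t0) \<le> (\<Sum>t'<t. v3 (nG t'))"
      by (rule member_le_sum) (use 3 t v3G_01 in auto)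
    moreover have "v3 (nG t0) = 1" using t0 by (simp add: v3G_val)
    moreover have "v3 (nG t) \<le> 1" using t v3G_01 by blast
    ultimately show ?thesis using 3 t by (simp add: v4Sel relu_npos)
  qed
qed

lemma v5GV_val: "t < T \<Longrightarrow> r < R \<Longrightarrow> v5 (nGV t r) = (if t = t0 then min (Sb t0 r) 1 else 0)"
  by (simp add: v5GV v4Sel_val relu_def Sb_nn)

lemma v5GN_val: "t < T \<Longrightarrow> r < R \<Longrightarrow> v5 (nGN t r) = (if t = t0 then min (Nb t0 r) 1 else 0)"
  by (simp add: v5GN v4Sel_val relu_def Nb_nn)

definition "occ = h t0 ` supp"

lemma Nb_t0: "min (Nb t0 r) 1 = (if r \<in> occ then 1 else 0)"
proof -
  have fin: "finite {i \<in> supp. h t0 i = r}" using fin_supp by simp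
  have "\<forall>a\<in>{i \<in> supp. h t0 i = r}. \<forall>b\<in>{i \<in> supp. h t0 i = r}. a = b"
    using t0(2) by (auto simp: inj_on_def)
  then have c1: "card {i \<in> supp. h t0 i = r} \<le> Suc 0" using fin by (simp only: card_le_Suc0_iff_eq)
  have iff: "r \<in> occ \<longleftrightarrow> {i \<in> supp. h t0 i = r} \<noteq> {}" unfolding occ_def by auto
  show ?thesis
  proof (cases "{i \<in> supp. h t0 i = r} = {}")
    case True
    then have "r \<notin> occ" using iff by simp
    then show ?thesis by (simp add: Nb_card True)
  next
    case False
    then have "card {i \<in> supp. h t0 i = r} \<noteq> 0" using fin by simp
    then have "card {i \<in> supp. h t0 i = r} = 1" using c1 by linarith
    then show ?thesis using False iff by (simp add: Nb_card)
  qed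
qed

lemma Sb_t0: "Sb t0 r = (if r \<in> occ then x ! (the_inv_into supp (h t0) r) else 0)"
proof -
  have "Sb t0 r = (\<Sum>i\<in>{i \<in> supp. h t0 i = r}. x ! i)"
  proof -
    have "Sb t0 r = (\<Sum>i\<in>{i. i < d \<and> h t0 i = r}. x ! i)"
      unfolding Sb_def by (simp add: sum.If_cases Int_def lessThan_def)
    also have "\<dots> = (\<Sum>i\<in>{i \<in> supp. h t0 i = r}. x ! i)"
      by (rule sum.mono_neutral_right) (auto simp: supp_def)
    finally show ?thesis .
  qed
  also have "\<dots> = (if r \<in> occ then x ! (the_inv_into supp (h t0) r) else 0)"
  proof (cases "r \<in> occ")
    case True
    then obtain i where i: "i \<in> supp" "h t0 i = r" unfolding occ_def by blast
    have "{i \<in> supp. h t0 i = r} = {i}" using i t0(2) by (auto simp: inj_on_def)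
    moreover have "the_inv_into supp (h t0) r = i" using i t0(2) by (simp add: the_inv_into_f_eq)
    ultimately show ?thesis using True by simp
  next
    case False
    then have e: "{i \<in> supp. h t0 i = r} = {}" unfolding occ_def by auto
    show ?thesis unfolding e using False by simp
  qed
  finally show ?thesis .
qed

lemma Sb_t0_range: "0 \<le> Sb t0 r \<and> Sb t0 r \<le> 1"
proof -
  have "x ! (the_inv_into supp (h t0) r) < 1" if "r \<in> occ"
  proof -
    have "the_inv_into supp (h t0) r \<in> supp"
      using that t0(2) unfolding occ_def by (auto intro: the_inv_into_into)
    then show ?thesis using xlt1 supp_d by blast
  qed
  then show ?thesis using Sb_nn[of t0 r] Sb_t0 by (cases "r \<in> occ") auto
qed

end


lemma filter_map_mset:
  "mset (filter PP (map g [0..<n])) = image_mset g (mset_set {j. j < n \<and> PP (g j)})"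
proof -
  have "filter PP (map g [0..<n]) = map g (filter (PP \<circ> g) [0..<n])" by (simp add: filter_map)
  then have "mset (filter PP (map g [0..<n])) = image_mset g (mset (filter (PP \<circ> g) [0..<n]))" by simp
  also have "mset (filter (PP \<circ> g) [0..<n]) = mset_set (set (filter (PP \<circ> g) [0..<n]))"
    by (simp add: mset_set_set)
  also have "set (filter (PP \<circ> g) [0..<n]) = {j. j < n \<and> PP (g j)}" by auto
  finally show ?thesis .
qed

lemma final_comb:
  fixes x :: "real list" and f :: "nat \<Rightarrow> nat" and out y :: "nat \<Rightarrow> real"
  assumes lenx: "length x = d"
    and S: "S = {i. i < d \<and> x ! i \<noteq> 0}"
    and inj: "inj_on f S" and fR: "f ` S \<subseteq> {..<R}" and cardS: "card S \<le> k"
    and out: "\<And>j. j < k \<Longrightarrow> out j = (\<Sum>r<R. if card {r' \<in> f ` S. r' < r} = j then y r else 0)"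
    and y: "\<And>r. y r = (if r \<in> f ` S then x ! (the_inv_into S f r) else 0)"
  shows "mset (filter (\<lambda>z. z \<noteq> 0) (map out [0..<k])) = mset (filter (\<lambda>z. z \<noteq> 0) x)"
proof -
  define occ where "occ = f ` S"
  define q where "q r = card {r' \<in> occ. r' < r}" for r
  have finS: "finite S" unfolding S by simp
  have finocc: "finite occ" unfolding occ_def using finS by simp
  have cardocc: "card occ = card S" unfolding occ_def using inj by (simp add: card_image)
  have q_lt: "q r < card occ" if r: "r \<in> occ" for r
  proof -
    have "{r' \<in> occ. r' < r} \<subset> occ" using r by auto
    then show ?thesis unfolding q_def using finocc by (rule psubset_card_mono[rotated])
  qed
  have q_mono: "q r1 < q r2" if "r1 \<in> occ" "r2 \<in> occ" "r1 < r2" for r1 r2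
  proof -
    have "{r' \<in> occ. r' < r1} \<subset> {r' \<in> occ. r' < r2}" using that by auto
    then show ?thesis unfolding q_def using finocc by (intro psubset_card_mono) auto
  qed
  have q_inj: "inj_on q occ"
  proof (rule inj_onI)
    fix r1 r2 assume "r1 \<in> occ" "r2 \<in> occ" "q r1 = q r2"
    then show "r1 = r2" using q_mono by (metis less_irrefl linorder_neqE_nat)
  qed
  have ynz: "y r \<noteq> 0" if r: "r \<in> occ" for r
  proof -
    have "the_inv_into S f r \<in> S" using r inj unfolding occ_def by (auto intro: the_inv_into_into)
    then show ?thesis using r y unfolding occ_def S by auto
  qed
  have y0: "y r = 0" if "r \<notin> occ" for r using that y unfolding occ_def by simp
  have outq: "out (q r) = y r" if r: "r \<in> occ" for r
  proof -
    have qk: "q r < k" using q_lt[OF r] cardocc cardS by linarith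
    have rR: "r < R" using r fR unfolding occ_def by auto
    have "out (q r) = (\<Sum>r'<R. if q r' = q r then y r' else 0)" using out[OF qk] unfolding q_def occ_def .
    also have "\<dots> = (\<Sum>r'<R. if r' = r then y r else 0)"
    proof (rule sum.cong)
      fix r' assume "r' \<in> {..<R}"
      show "(if q r' = q r then y r' else 0) = (if r' = r then y r else 0)"
      proof (cases "r' \<in> occ")
        case True
        then show ?thesis using q_inj r by (auto simp: inj_on_def)
      next
        case False
        then show ?thesis using r y0 by auto
      qed
    qed simp
    also have "\<dots> = y r" using rR by (simp add: sum.delta)
    finally show ?thesis .
  qed
  have out0: "out j = 0" if j: "j < k" "j \<notin> q ` occ" for j
  proof -
    have "out j = (\<Sum>r'<R. if q r' = j then y r' else 0)" using out[OF j(1)] unfolding q_def occ_def .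
    also have "\<dots> = 0"
    proof (rule sum.neutral, rule ballI)
      fix r' assume "r' \<in> {..<R}"
      show "(if q r' = j then y r' else 0) = 0"
        using j(2) y0 by (cases "r' \<in> occ") auto
    qed
    finally show ?thesis .
  qed
  have nzset: "{j. j < k \<and> out j \<noteq> 0} = q ` occ"
  proof
    show "{j. j < k \<and> out j \<noteq> 0} \<subseteq> q ` occ" using out0 by blast
    show "q ` occ \<subseteq> {j. j < k \<and> out j \<noteq> 0}"
    proof
      fix j assume "j \<in> q ` occ"
      then obtain r where r: "r \<in> occ" "j = q r" by blast
      have "q r < k" using q_lt[OF r(1)] cardocc cardS by linarith
      then show "j \<in> {j. j < k \<and> out j \<noteq> 0}" using r outq ynz by auto
    qed
  qed
  have "mset (filter (\<lambda>z. z \<noteq> 0) (map out [0..<k])) = image_mset out (mset_set (q ` occ))"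
    unfolding filter_map_mset nzset ..
  also have "\<dots> = image_mset out (image_mset q (mset_set occ))"
    using q_inj by (simp add: image_mset_mset_set)
  also have "\<dots> = image_mset (\<lambda>r. out (q r)) (mset_set occ)"
    by (simp add: multiset.map_comp comp_def)
  also have "\<dots> = image_mset y (mset_set occ)"
    by (rule image_mset_cong) (use finocc outq in simp)
  also have "\<dots> = image_mset y (image_mset f (mset_set S))"
    unfolding occ_def using inj by (simp add: image_mset_mset_set)
  also have "\<dots> = image_mset (\<lambda>i. x ! i) (mset_set S)"
  proof -
    have "y (f i) = x ! i" if "i \<in> S" for i
      using that inj y by (simp add: the_inv_into_f_f)
    then have "image_mset (\<lambda>i. y (f i)) (mset_set S) = image_mset (\<lambda>i. x ! i) (mset_set S)"
      by (intro image_mset_cong) (use finS in simp)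
    then show ?thesis by (simp add: multiset.map_comp comp_def)
  qed
  also have "\<dots> = mset (filter (\<lambda>z. z \<noteq> 0) (map (\<lambda>i. x ! i) [0..<d]))"
    unfolding filter_map_mset S ..
  also have "map (\<lambda>i. x ! i) [0..<d] = x" using lenx map_nth by metis
  finally show ?thesis .
qed

context netsem
begin

lemma Y_val: "r < R \<Longrightarrow> (\<Sum>t<T. if r < R then v5 (nGV t r) else 0) = Sb t0 r"
proof -
  assume r: "r < R"
  have "(\<Sum>t<T. if r < R then v5 (nGV t r) else 0) = (\<Sum>t<T. if t = t0 then min (Sb t0 r) 1 else 0)"
    by (rule sum.cong) (auto simp: r v5GV_val)
  also have "\<dots> = min (Sb t0 r) 1" using t0(1) by (simp add: sum.delta)
  also have "\<dots> = Sb t0 r" using Sb_t0_range by simp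
  finally show ?thesis .
qed

lemma Y_val': "r < R \<Longrightarrow> (\<Sum>t<T. v5 (nGV t r)) = Sb t0 r"
  using Y_val by simp

lemma Q_val: "r < R \<Longrightarrow> (\<Sum>t<T. \<Sum>r'<R. if r' < r then v5 (nGN t r') else 0) = real (card {r' \<in> occ. r' < r})"
proof -
  assume r: "r < R"
  have "(\<Sum>t<T. \<Sum>r'<R. if r' < r then v5 (nGN t r') else 0)
      = (\<Sum>t<T. if t = t0 then (\<Sum>r'<R. if r' < r then (if r' \<in> occ then 1 else 0) else 0) else 0)"
  proof (rule sum.cong)
    fix t assume t: "t \<in> {..<T}"
    show "(\<Sum>r'<R. if r' < r then v5 (nGN t r') else 0) =
        (if t = t0 then (\<Sum>r'<R. if r' < r then (if r' \<in> occ then 1 else 0) else 0) else 0)"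
    proof (cases "t = t0")
      case True
      have "(\<Sum>r'<R. if r' < r then v5 (nGN t r') else 0) =
          (\<Sum>r'<R. if r' < r then (if r' \<in> occ then 1 else 0) else 0)"
        by (rule sum.cong) (use t True in \<open>auto simp: v5GN_val Nb_t0\<close>)
      then show ?thesis using True by simp
    next
      case False
      have "(\<Sum>r'<R. if r' < r then v5 (nGN t r') else 0) = 0"
        by (rule sum.neutral) (use t False in \<open>auto simp: v5GN_val\<close>)
      then show ?thesis using False by simp
    qed
  qed simp
  also have "\<dots> = (\<Sum>r'<R. if r' < r then (if r' \<in> occ then 1 else 0) else 0)"
    using t0(1) by (simp add: sum.delta)
  also have "\<dots> = (\<Sum>r'<r. if r' \<in> occ then 1 else 0)" using r by (simp add: sum_lt_restrict)
  also have "\<dots> = real (card {r' \<in> {..<r}. r' \<in> occ})" by (rule sum_count) simp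
  also have "{r' \<in> {..<r}. r' \<in> occ} = {r' \<in> occ. r' < r}" by auto
  finally show ?thesis .
qed

lemma out_val: "j < k \<Longrightarrow> (\<Sum>r<R. v6 (nP 1 r j) - v6 (nP 2 r j) - v6 (nP 3 r j) + v6 (nP 4 r j))
   = (\<Sum>r<R. if card {r' \<in> occ. r' < r} = j then Sb t0 r else 0)"
proof (rule sum.cong)
  fix r assume j: "j < k" and r: "r \<in> {..<R}"
  let ?q = "card {r' \<in> occ. r' < r}"
  have r': "r < R" using r by simp
  have jk: "j \<le> k" using j by simp
  have "v6 (nP 1 r j) = relu (Sb t0 r - real ?q + real j)" using r' jk by (simp add: v6P Y_val Y_val' Q_val)
  moreover have "v6 (nP 2 r j) = relu (real j - real ?q)" using r' jk by (simp add: v6P Q_val)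
  moreover have "v6 (nP 3 r j) = relu (Sb t0 r - real ?q + real j - 1)" using r' jk
    by (simp add: v6P Y_val Y_val' Q_val algebra_simps)
  moreover have "v6 (nP 4 r j) = relu (real j - real ?q - 1)" using r' jk by (simp add: v6P Q_val algebra_simps)
  ultimately show "v6 (nP 1 r j) - v6 (nP 2 r j) - v6 (nP 3 r j) + v6 (nP 4 r j) =
     (if ?q = j then Sb t0 r else 0)"
    using pick[of "Sb t0 r" ?q j] Sb_t0_range by simp
qed simp

lemma net_correct:
  "length (eval_net (net dl h d k T R) x) = k \<and>
   mset (filter (\<lambda>z. z \<noteq> 0) (eval_net (net dl h d k T R) x)) = mset (filter (\<lambda>z. z \<noteq> 0) x)"
proof
  show "length (eval_net (net dl h d k T R) x) = k" by (simp add: eval_out)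
  have fR: "h t0 ` supp \<subseteq> {..<R}" using hR[OF t0(1)] supp_d by auto
  have cS: "card supp \<le> k" using supk unfolding supp_def .
  show "mset (filter (\<lambda>z. z \<noteq> 0) (eval_net (net dl h d k T R) x)) = mset (filter (\<lambda>z. z \<noteq> 0) x)"
    unfolding eval_out
  proof (rule final_comb[OF lenx supp_def t0(2) fR cS])
    fix j assume j: "j < k"
    show "(\<Sum>r<R. v6 (nP 1 r j) - v6 (nP 2 r j) - v6 (nP 3 r j) + v6 (nP 4 r j)) =
        (\<Sum>r<R. if card {r' \<in> h t0 ` supp. r' < r} = j then Sb t0 r else 0)"
      using out_val[OF j] unfolding occ_def .
  next
    fix r show "Sb t0 r = (if r \<in> h t0 ` supp then x ! (the_inv_into supp (h t0) r) else 0)"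
      using Sb_t0 unfolding occ_def .
  qed
qed

end


lemma length_pairs[simp]: "length (pairs T R F) = T * R"
  by (simp add: pairs_def length_concat comp_def sum_list_upt0)

lemma length_ids:
  "length (ids0 d) = d" "length (ids1 d T R) = 2 * d + 2 * (T * R)" "length (ids2 T R) = 3 * (T * R)"
  "length (ids3 T R) = T + 2 * (T * R)" "length (ids4 T R) = T + 2 * (T * R)"
  "length (ids5 k T R) = 2 * (T * R) + k" "length (ids6 k R) = 4 * (R * k)" "length (ids7 k) = k"
  by (simp_all add: ids0_def ids1_def ids2_def ids3_def ids4_def ids5_def ids6_def ids7_def
      length_concat comp_def sum_list_upt0)

lemma mk_in_out[simp]: "layer_in (mk dl h ins outs) = length ins" "layer_out (mk dl h ins outs) = length outs"
  by (simp_all add: mk_def layer_in_def layer_out_def)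

lemma valid_net_net: "valid_net d k (net dl h d k T R)"
proof -
  have "\<forall>i. Suc i < 7 \<longrightarrow> layer_out (net dl h d k T R ! i) = layer_in (net dl h d k T R ! Suc i)"
  proof (intro allI impI)
    fix i :: nat assume "Suc i < 7"
    then have "i = 0 \<or> i = 1 \<or> i = 2 \<or> i = 3 \<or> i = 4 \<or> i = 5" by linarith
    then show "layer_out (net dl h d k T R ! i) = layer_in (net dl h d k T R ! Suc i)"
      by (auto simp: net_def)
  qed
  then show ?thesis by (simp add: valid_net_def net_def length_ids)
qed

lemma depth_net: "net_depth (net dl h d k T R) = 7"
  by (simp add: net_depth_def net_def)

lemma width_net: "net_width (net dl h d k T R) \<le> 2 * d + 3 * (T * R) + T + k + 4 * (R * k)"
  by (simp add: net_width_def net_def length_ids)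

lemma cw_bound: "0 < dl \<Longrightarrow> dl \<le> 1 \<Longrightarrow> \<bar>cw dl h w u\<bar> \<le> 1 / dl"
proof -
  assume a: "0 < dl" "dl \<le> 1"
  then have one: "1 \<le> 1 / dl" by simp
  have pos: "0 \<le> 1 / dl" using a by simp
  show ?thesis
    by (cases w; cases u) (use one pos in \<open>auto simp: cw_def\<close>)
qed

lemma bw_bound: "\<bar>bw w\<bar> \<le> 1"
  by (cases w) (auto simp: bw_def)

lemma weights_net: "0 < dl \<Longrightarrow> dl \<le> 1 \<Longrightarrow> weights_bounded (1 / dl) (net dl h d k T R)"
proof -
  assume a: "0 < dl" "dl \<le> 1"
  have one: "1 \<le> 1 / dl" using a by simp
  have bb: "\<bar>bw w\<bar> \<le> 1 / dl" for w using bw_bound[of w] one by linarith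
  have "weights_bounded (1 / dl) [mk dl h ins outs]" for ins outs
    unfolding weights_bounded_def mk_def
    using cw_bound[OF a] bb by auto
  then show ?thesis unfolding net_def weights_bounded_def by simp
qed


lemma ln2_ge: "1/2 \<le> ln (2::real)"
  using exp_half_le2 by (subst ln_ge_iff) auto

lemma log2_bound:
  fixes \<epsilon> D :: real
  assumes e: "0 < \<epsilon>" and D: "1 \<le> D"
  shows "log 2 (D + 1) \<le> 1 + 2 * (D powr \<epsilon>) / \<epsilon>"
proof -
  have "log 2 (D + 1) \<le> log 2 (2 * D)" using D by simp
  also have "\<dots> = 1 + log 2 D" using D by (simp add: log_mult)
  also have "log 2 D = ln D / ln 2" by (simp add: log_def)
  also have "\<dots> \<le> ln D / (1/2)"
    using D ln2_ge by (intro divide_left_mono) auto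
  also have "\<dots> = 2 * ln D" by simp
  also have "\<dots> \<le> 2 * (D powr \<epsilon> / \<epsilon>)" using ln_powr_bound[OF D e] by simp
  finally show ?thesis by simp
qed

lemma width_bound:
  fixes \<epsilon> \<gamma> :: real and d k b :: nat
  assumes e: "0 < \<epsilon>" and g: "0 < \<gamma>" and d: "1 \<le> d" and k1: "1 \<le> k"
    and kE: "real k \<le> real d powr \<epsilon>" and bB: "real b \<le> log 2 (real d + 1) + 1"
  shows "real (2 * d + 3 * ((k * b + 1) * (2 * k * k)) + (k * b + 1) + k + 4 * ((2 * k * k) * k))
     \<le> (40 + 16 / \<epsilon>) * real d powr max (4 * \<epsilon> + 2 * \<gamma>) 1"
proof -
  define D where "D = real d"
  define E where "E = D powr \<epsilon>"
  define K where "K = real k"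
  define B where "B = real b"
  define Dm where "Dm = D powr max (4 * \<epsilon> + 2 * \<gamma>) 1"
  have D1: "1 \<le> D" using d by (simp add: D_def)
  have E1: "1 \<le> E" unfolding E_def using D1 e by (simp add: ge_one_powr_ge_zero)
  have K1: "1 \<le> K" using k1 by (simp add: K_def)
  have KE: "K \<le> E" using kE by (simp add: K_def E_def D_def)
  have B0: "0 \<le> B" by (simp add: B_def)
  have BE: "B \<le> 2 + 2 * E / \<epsilon>"
    using bB log2_bound[OF e D1] by (simp add: B_def E_def D_def)
  have E34: "E ^ 3 \<le> E ^ 4" using E1 by (simp add: power_increasing)
  have K3: "K ^ 3 \<le> E ^ 3" using K1 KE by (intro power_mono) auto
  have K3B: "K ^ 3 * B \<le> E ^ 3 * (2 + 2 * E / \<epsilon>)"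
    using K3 BE B0 E1 by (intro mult_mono) auto
  also have "\<dots> = 2 * E ^ 3 + 2 * (E ^ 4 / \<epsilon>)" using e by (simp add: power4_eq_xxxx power3_eq_cube field_simps)
  finally have K3B': "K ^ 3 * B \<le> 2 * E ^ 4 + 2 * (E ^ 4 / \<epsilon>)" using E34 by linarith
  have "K ^ 1 \<le> K ^ 3" by (rule power_increasing) (use K1 in auto)
  then have KK1: "K \<le> K ^ 3" by simp
  have KK2: "K ^ 2 \<le> K ^ 3" by (rule power_increasing) (use K1 in auto)
  have KK3: "1 \<le> K ^ 3" using K1 by (simp add: one_le_power)
  note KK = KK1 KK2 KK3
  have KB: "K * B \<le> K ^ 3 * B" using KK(1) B0 by (simp add: mult_right_mono)
  have K3E: "K ^ 3 \<le> E ^ 4" using K3 E34 by linarith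
  have E4: "E ^ 4 = D powr (4 * \<epsilon>)"
  proof -
    have "E ^ 4 = E powr (real 4)" using E1 by (simp add: powr_realpow)
    also have "\<dots> = D powr (4 * \<epsilon>)" unfolding E_def by (simp add: powr_powr mult.commute)
    finally show ?thesis .
  qed
  have EDm: "E ^ 4 \<le> Dm" unfolding E4 Dm_def using D1 g by (intro powr_mono) auto
  have DDm: "D \<le> Dm"
  proof -
    have "D = D powr 1" using D1 by (simp add: powr_one)
    also have "\<dots> \<le> Dm" unfolding Dm_def using D1 by (intro powr_mono) auto
    finally show ?thesis .
  qed
  have EDm': "E ^ 4 / \<epsilon> \<le> Dm / \<epsilon>" using EDm e by (simp add: divide_right_mono)
  have Dm0: "0 \<le> Dm" using DDm D1 by linarith
  have Dme: "0 \<le> Dm / \<epsilon>" using Dm0 e by simp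
  have eq: "real (2 * d + 3 * ((k * b + 1) * (2 * k * k)) + (k * b + 1) + k + 4 * ((2 * k * k) * k))
      = 2 * D + 6 * (K ^ 3 * B) + 6 * K ^ 2 + K * B + 1 + K + 8 * K ^ 3"
    by (simp add: D_def K_def B_def algebra_simps power2_eq_square power3_eq_cube)
  have rhs: "(40 + 16 / \<epsilon>) * real d powr max (4 * \<epsilon> + 2 * \<gamma>) 1 = 40 * Dm + 16 * (Dm / \<epsilon>)"
    by (simp add: Dm_def D_def algebra_simps)
  show ?thesis unfolding eq rhs
    using K3B' KK KB K3E EDm EDm' DDm Dm0 Dme by linarith
qed


definition zl :: "nat \<Rightarrow> nat \<Rightarrow> layer" where "zl n m = (n, m, \<lambda>_ _. 0, \<lambda>_. 0)"
definition znet :: "nat \<Rightarrow> nat \<Rightarrow> layer list" where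
  "znet d k = [zl d 1, zl 1 1, zl 1 1, zl 1 1, zl 1 1, zl 1 1, zl 1 k]"

lemma apply_zl: "apply_affine (zl n m) v = replicate m 0"
  by (simp add: zl_def apply_affine_def map_replicate_const)

lemma eval_znet: "eval_net (znet d k) v = replicate k 0"
  by (simp add: znet_def apply_zl)

lemma znet_props:
  assumes "0 \<le> B"
  shows "valid_net d k (znet d k)" "net_depth (znet d k) = 7" "net_width (znet d k) = 1"
    "weights_bounded B (znet d k)"
proof -
  have "\<forall>i. Suc i < 7 \<longrightarrow> layer_out (znet d k ! i) = layer_in (znet d k ! Suc i)"
  proof (intro allI impI)
    fix i :: nat assume "Suc i < 7"
    then have "i = 0 \<or> i = 1 \<or> i = 2 \<or> i = 3 \<or> i = 4 \<or> i = 5" by linarith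
    then show "layer_out (znet d k ! i) = layer_in (znet d k ! Suc i)"
      by (auto simp: znet_def zl_def layer_in_def layer_out_def)
  qed
  then show "valid_net d k (znet d k)"
    by (simp add: valid_net_def znet_def zl_def layer_in_def layer_out_def)
  show "net_depth (znet d k) = 7" by (simp add: net_depth_def znet_def)
  show "net_width (znet d k) = 1" by (simp add: net_width_def znet_def zl_def layer_out_def)
  show "weights_bounded B (znet d k)" using assms by (simp add: weights_bounded_def znet_def zl_def)
qed

theorem propositionD4:
  fixes \<epsilon> \<gamma> :: real
  assumes "\<epsilon> > 0" and "\<gamma> > 0"
  shows "\<exists>C>0. \<forall>\<delta>>0. \<forall>d::nat. real d \<ge> 1 / ((2 * \<epsilon> + \<gamma>) powr (1 / \<gamma>)) \<longrightarrow>
    (\<exists>N. valid_net d (nat \<lfloor>real d powr \<epsilon>\<rfloor>) N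
       \<and> net_depth N = 7
       \<and> real (net_width N) \<le> C * real d powr (max (4 * \<epsilon> + 2 * \<gamma>) 1)
       \<and> weights_bounded (1 / \<delta>) N
       \<and> (\<forall>x. sparse d \<epsilon> x \<and> in_S d \<delta> x \<longrightarrow>
            length (eval_net N x) = nat \<lfloor>real d powr \<epsilon>\<rfloor>
            \<and> mset (filter (\<lambda>z. z \<noteq> 0) (eval_net N x)) = mset (filter (\<lambda>z. z \<noteq> 0) x)))"
proof -
  have e: "0 < \<epsilon>" and g: "0 < \<gamma>" using assms by auto
  define C where "C = 40 + 16 / \<epsilon>"
  have C0: "0 < C" using e by (simp add: C_def add_pos_pos)
  show ?thesis
  proof (intro exI[of _ C] conjI allI impI)
    show "0 < C" by (rule C0)
    fix \<delta> :: real and d :: nat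
    assume dl: "0 < \<delta>" and dge: "1 / ((2 * \<epsilon> + \<gamma>) powr (1 / \<gamma>)) \<le> real d"
    have "0 < 1 / ((2 * \<epsilon> + \<gamma>) powr (1 / \<gamma>))" using e g by simp
    then have "0 < real d" using dge by linarith
    then have d1: "1 \<le> d" by simp
    define k where "k = nat \<lfloor>real d powr \<epsilon>\<rfloor>"
    define M where "M = max (4 * \<epsilon> + 2 * \<gamma>) 1"
    have E1: "1 \<le> real d powr \<epsilon>" using d1 e by (simp add: ge_one_powr_ge_zero)
    have k1: "1 \<le> k" unfolding k_def using E1 by linarith
    have kE: "real k \<le> real d powr \<epsilon>" unfolding k_def using E1 by linarith
    have Dm1: "1 \<le> real d powr M" using d1 by (simp add: ge_one_powr_ge_zero M_def)
    have supk: "card {i. i < d \<and> x ! i \<noteq> 0} \<le> k" if "sparse d \<epsilon> x" for x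
    proof -
      have "real (card {i. i < d \<and> x ! i \<noteq> 0}) \<le> real d powr \<epsilon>" using that by (simp add: sparse_def)
      then show ?thesis unfolding k_def by linarith
    qed
    have main: "\<exists>N. valid_net d k N \<and> net_depth N = 7
       \<and> real (net_width N) \<le> C * real d powr M
       \<and> weights_bounded (1 / \<delta>) N
       \<and> (\<forall>x. sparse d \<epsilon> x \<and> in_S d \<delta> x \<longrightarrow>
            length (eval_net N x) = k
            \<and> mset (filter (\<lambda>z. z \<noteq> 0) (eval_net N x)) = mset (filter (\<lambda>z. z \<noteq> 0) x))"
    proof (cases "\<delta> \<le> 1")
      case True
      define b where "b = nat \<lceil>log 2 (real d + 1)\<rceil>"
      have lg0: "0 \<le> log 2 (real d + 1)" by simp
      have bB: "real b \<le> log 2 (real d + 1) + 1" unfolding b_def using lg0 by linarith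
      have "real (Suc d) = 2 powr (log 2 (real d + 1))" by simp
      also have "\<dots> \<le> 2 powr (real b)" unfolding b_def using lg0 by (intro powr_mono) linarith+
      also have "\<dots> = real (2 ^ b)" by (simp add: powr_realpow)
      finally have sb: "Suc d \<le> 2 ^ b" by linarith
      obtain hs where hs: "length hs = k * b + 1" "\<forall>f\<in>set hs. \<forall>i<d. f i < 2*k*k"
        "\<forall>S. S \<subseteq> {..<d} \<and> card S \<le> k \<longrightarrow> (\<exists>t<k * b + 1. inj_on (hs ! t) S)"
        using hash_family[of d k b] d1 k1 sb by auto
      define N where "N = net \<delta> (\<lambda>t i. (hs ! t) i) d k (k * b + 1) (2 * k * k)"
      show ?thesis
      proof (intro exI[of _ N] conjI allI impI)
        show "valid_net d k N" unfolding N_def by (rule valid_net_net)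
        show "net_depth N = 7" unfolding N_def by (rule depth_net)
        show "weights_bounded (1 / \<delta>) N" unfolding N_def using dl True by (rule weights_net)
        have "real (net_width N) \<le> real (2 * d + 3 * ((k * b + 1) * (2 * k * k)) + (k * b + 1) + k + 4 * ((2 * k * k) * k))"
          unfolding N_def using width_net of_nat_mono by blast
        also have "\<dots> \<le> C * real d powr M"
          unfolding C_def M_def by (rule width_bound[OF e g d1 k1 kE bB])
        finally show "real (net_width N) \<le> C * real d powr M" .
        fix x assume x: "sparse d \<epsilon> x \<and> in_S d \<delta> x"
        interpret netsem \<delta> d k "k * b + 1" "2 * k * k" "\<lambda>t i. (hs ! t) i" x
        proof
          show "0 < \<delta>" by (rule dl)
          show "length x = d" using x by (simp add: sparse_def)
          show "\<And>i. i < d \<Longrightarrow> x ! i \<noteq> 0 \<Longrightarrow> \<delta> \<le> x ! i \<and> x ! i \<le> 1 - \<delta>"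
            using x by (simp add: in_S_def)
          show "\<And>t i. t < k * b + 1 \<Longrightarrow> i < d \<Longrightarrow> (hs ! t) i < 2 * k * k"
            using hs(1,2) nth_mem by metis
          show "card {i. i < d \<and> x ! i \<noteq> 0} \<le> k" using supk x by blast
          have "{i. i < d \<and> x ! i \<noteq> 0} \<subseteq> {..<d} \<and> card {i. i < d \<and> x ! i \<noteq> 0} \<le> k"
            using supk x by auto
          then show "\<exists>t<k * b + 1. inj_on (hs ! t) {i. i < d \<and> x ! i \<noteq> 0}" using hs(3) by blast
        qed
        show "length (eval_net N x) = k" unfolding N_def using net_correct by blast
        show "mset (filter (\<lambda>z. z \<noteq> 0) (eval_net N x)) = mset (filter (\<lambda>z. z \<noteq> 0) x)"
          unfolding N_def using net_correct by blast
      qed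
    next
      case False
      show ?thesis
      proof (intro exI[of _ "znet d k"] conjI allI impI)
        have B0: "0 \<le> 1 / \<delta>" using dl by simp
        show "valid_net d k (znet d k)" "net_depth (znet d k) = 7" "weights_bounded (1 / \<delta>) (znet d k)"
          using znet_props[OF B0] by auto
        have "real (net_width (znet d k)) = 1" using znet_props[OF B0] by simp
        also have "\<dots> \<le> C * real d powr M"
        proof -
          have "1 \<le> C" unfolding C_def using e by (simp add: add_increasing2)
          then show ?thesis using Dm1 by (metis mult_mono' mult_1 zero_le_one)
        qed
        finally show "real (net_width (znet d k)) \<le> C * real d powr M" .
        fix x assume x: "sparse d \<epsilon> x \<and> in_S d \<delta> x"
        show "length (eval_net (znet d k) x) = k" by (simp add: eval_znet)
        have lx: "length x = d" using x by (simp add: sparse_def)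
        have "\<forall>i<d. x ! i = 0"
        proof (intro allI impI)
          fix i assume i: "i < d"
          show "x ! i = 0"
          proof (rule ccontr)
            assume "x ! i \<noteq> 0"
            then have "\<delta> \<le> x ! i \<and> x ! i \<le> 1 - \<delta>" using x i by (simp add: in_S_def)
            then show False using False by linarith
          qed
        qed
        then have "filter (\<lambda>z. z \<noteq> 0) x = []" using lx by (auto simp: filter_empty_conv in_set_conv_nth)
        then show "mset (filter (\<lambda>z. z \<noteq> 0) (eval_net (znet d k) x)) = mset (filter (\<lambda>z. z \<noteq> 0) x)"
          by (simp add: eval_znet)
      qed
    qed
    then show "\<exists>N. valid_net d (nat \<lfloor>real d powr \<epsilon>\<rfloor>) N \<and> net_depth N = 7
       \<and> real (net_width N) \<le> C * real d powr (max (4 * \<epsilon> + 2 * \<gamma>) 1)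
       \<and> weights_bounded (1 / \<delta>) N
       \<and> (\<forall>x. sparse d \<epsilon> x \<and> in_S d \<delta> x \<longrightarrow>
            length (eval_net N x) = nat \<lfloor>real d powr \<epsilon>\<rfloor>
            \<and> mset (filter (\<lambda>z. z \<noteq> 0) (eval_net N x)) = mset (filter (\<lambda>z. z \<noteq> 0) x))"
      unfolding k_def M_def .
  qed
qed

end
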